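(* Let $\{\mu_n^{(m)}:1\le n\le m\}$ be a family of smooth functions, $\mu_n^{(m)}$ a function of $(\nu_n,\dots,\nu_m)$, with $\mu_n^{(m)}(0,\dots,0)=0$, satisfying for all $1\le n\le m$ $$\mu_n^{(m)}(\nu_n,\dots,\nu_m)=\begin{cases}\dfrac{\nu_m^{m+1}}{m+1},& n=m,\\[2mm] \displaystyle\sum_{k=0}^n\binom nk\nu_m^{\,n-k}\,\mu_k^{(m-n-1)}(\nu_{k+n},\dots,\nu_{m-1}),& n<m,\end{cases}$$ (equivalently, $\partial\mu_n^{(m)}/\partial\nu_k=n\,\mu_{n-1}^{(k-1)}(\nu_{m-k+n},\dots,\nu_m)$ for $k=n,\dots,m$), with the conventions $\mu_0^{(l)}(x_0,\dots,x_l)=x_0$ and $\mu_k^{(l)}\equiv0$ if $k>l$ or $l<0$. Then for every level $m\ge1$ and all $k,l\in\{1,\dots,m\}$, $$\sum_{j=1}^m\frac{\partial\mu_k^{(m)}}{\partial\nu_j}\frac{\partial\mu_l^{(m)}}{\partial\nu_{m+1-j}}=(k+l)\mu_{k+l-1}^{(m)},\qquad \sum_{j=1}^m\partial_x\Big(\frac{\partial\mu_k^{(m)}}{\partial\nu_j}\Big)\frac{\partial\mu_l^{(m)}}{\partial\nu_{m+1-j}}=k\,\partial_x\mu_{k+l-1}^{(m)},$$ where $\mu_j^{(m)}:=0$ for $j\ge m+1$ and the second identity holds for any smooth dependence of $\nu_1,\dots,\nu_m$ on $x$. In other words, $\mu_k=\mu_k^{(m)}(\boldsymbol\nu)$ flattens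 the bracket with $\alpha_{kl}=(k+l)\mu_{k+l-1}$, $\beta_{kl}=k\partial_x\mu_{k+l-1}$ to the constant antidiagonal metric $g_{ij}=\delta_{i+j,m+1}$. *)

theory Defs
  imports "HOL-Analysis.Analysis"
begin

(* mu n m x  =  mu_n^{(m)}(x_n, ..., x_m); the variables are given as a function
   x :: nat => real, of which only the entries x_n..x_m are read. *)
function mu :: "nat \<Rightarrow> nat \<Rightarrow> (nat \<Rightarrow> real) \<Rightarrow> real" where
  "mu n m x =
     (if n = 0 then x 0
      else if m < n then 0
      else if n = m then x m ^ (m + 1) / real (m + 1)
      else (\<Sum>k = 0..n. real (n choose k) * x m ^ (n - k)
                          * mu k (m - n - 1) (\<lambda>i. x (i + n))))"
  by pat_completeness auto
termination
  by (relation "Wellfounded.measure (\<lambda>(n, m, x). m)") auto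

declare mu.simps[simp del]

definition partial :: "((nat \<Rightarrow> real) \<Rightarrow> real) \<Rightarrow> nat \<Rightarrow> (nat \<Rightarrow> real) \<Rightarrow> real" where
  "partial f j v = deriv (\<lambda>t. f (v(j := t))) (v j)"

definition smooth_fun :: "(real \<Rightarrow> real) \<Rightarrow> bool" where
  "smooth_fun f \<longleftrightarrow> (\<forall>n x. ((deriv ^^ n) f) differentiable (at x))"

end

theory Submission
  imports Defs "HOL-Computational_Algebra.Polynomial"
begin

definition U :: "nat \<Rightarrow> (nat \<Rightarrow> real) \<Rightarrow> real poly" where
  "U m x = (\<Sum>r<m. monom (x (m - r)) r)"

lemma coeff_U: "coeff (U m x) i = (if i < m then x (m - i) else 0)"
  by (simp add: U_def coeff_sum coeff_monom)

lemma U_Suc: "U (Suc m) x = [:x (Suc m):] + monom 1 1 * U m x"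
  by (rule poly_eqI) (auto simp: coeff_U coeff_monom_mult coeff_pCons split: nat.splits)

lemma coeff_agree_power:
  assumes "\<forall>i\<le>d. coeff p i = coeff q i" "i \<le> d"
  shows "coeff (p ^ j) i = coeff (q ^ j) i"
  using assms(2)
proof (induction j arbitrary: i)
  case 0 then show ?case by simp
next
  case (Suc j)
  have "coeff (p ^ Suc j) i = (\<Sum>a\<le>i. coeff p a * coeff (p ^ j) (i - a))"
    by (simp add: coeff_mult)
  also have "\<dots> = (\<Sum>a\<le>i. coeff q a * coeff (q ^ j) (i - a))"
    using Suc assms(1) by (intro sum.cong) auto
  also have "\<dots> = coeff (q ^ Suc j) i" by (simp add: coeff_mult)
  finally show ?case .
qed

lemma const_power: "[:c:] ^ n = [:c ^ n:]"
  by (induction n) (auto simp: mult.commute)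

lemma term_coeff:
  "coeff (of_nat a * (monom 1 1 * p) ^ j * [:c:] ^ r) d
     = real a * c ^ r * (if j \<le> d then coeff (p ^ j) (d - j) else (0::real))"
proof -
  have "of_nat a * (monom 1 1 * p) ^ j * [:c:] ^ r = smult (c ^ r * real a) (monom 1 j * p ^ j)"
    by (simp add: power_mult_distrib monom_power const_power of_nat_poly)
  then show ?thesis by (simp add: coeff_monom_mult)
qed

lemma mu_closed:
  "1 \<le> n \<Longrightarrow> n \<le> m \<Longrightarrow> mu n m x = coeff (U m x ^ (n+1)) (m-n) / (n+1)"
proof (induction m arbitrary: n x rule: less_induct)
  case (less m)
  show ?case
  proof (cases "n = m")
    case True
    have "coeff (U m x ^ (m+1)) 0 = x m ^ (m+1)"
      using less.prems True by (simp only: coeff_0_power) (simp add: coeff_U)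
    then show ?thesis using less.prems True
      by (simp add: mu.simps)
  next
    case False
    with less.prems have nm: "n < m" by simp
    then obtain m' where m': "m = Suc m'" by (cases m) auto
    let ?s = "\<lambda>i. x (i + n)"
    let ?U' = "U m' x"
    have rec: "mu n m x = (\<Sum>k = 0..n. real (n choose k) * x m ^ (n - k) * mu k (m - n - 1) ?s)"
      using less.prems nm by (subst mu.simps) simp
    have "U m x ^ (n+1) = ([:x m:] + monom 1 1 * ?U') ^ (n+1)"
      by (simp add: m' U_Suc)
    also have "\<dots> = (\<Sum>j\<le>n+1. of_nat (n + 1 choose j) * (monom 1 1 * ?U') ^ j * [:x m:] ^ (n + 1 - j))"
      by (subst add.commute) (rule binomial_ring)
    finally have e: "coeff (U m x ^ (n+1)) (m-n) = (\<Sum>j\<le>n+1. real (n + 1 choose j) * x m ^ (n + 1 - j) *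
          (if j \<le> m - n then coeff (?U' ^ j) (m - n - j) else 0))"
      by (simp only: coeff_sum term_coeff)
    have key: "(if Suc k \<le> m - n then coeff (?U' ^ Suc k) (m - n - Suc k) else 0)
               = real (Suc k) * mu k (m - n - 1) ?s" for k
    proof (cases "k = 0")
      case True
      have "m - n - 1 < m'" "m' - (m - n - 1) = n" using m' nm less.prems by auto
      then show ?thesis using True nm by (simp add: coeff_U mu.simps)
    next
      case k0: False
      show ?thesis
      proof (cases "Suc k \<le> m - n")
        case True
        have ih: "mu k (m - n - 1) ?s = coeff (U (m - n - 1) ?s ^ (k+1)) (m - n - 1 - k) / (k+1)"
          using less.IH[of "m - n - 1" k ?s] k0 True nm by auto
        have agree: "\<forall>i\<le>m - n - 2. coeff ?U' i = coeff (U (m - n - 1) ?s) i"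
        proof (intro allI impI)
          fix i assume "i \<le> m - n - 2"
          then have "i < m'" "i < m - n - 1" "m' - i = m - n - 1 - i + n" using m' nm True k0 by auto
          then show "coeff ?U' i = coeff (U (m - n - 1) ?s) i" by (simp add: coeff_U)
        qed
        have "coeff (?U' ^ Suc k) (m - n - Suc k) = coeff (U (m - n - 1) ?s ^ Suc k) (m - n - Suc k)"
          by (rule coeff_agree_power[OF agree]) (use True k0 in auto)
        moreover have "m - n - Suc k = m - n - 1 - k" by simp
        ultimately show ?thesis using True ih by simp
      next
        case False
        then have "mu k (m - n - 1) ?s = 0" using k0 by (subst mu.simps) auto
        then show ?thesis using False by simp
      qed
    qed
    have binom: "real (n + 1 choose Suc k) * real (Suc k) = real (n choose k) * real (n + 1)" for k
      using Suc_times_binomial[of k n] by (metis Suc_eq_plus1 mult.commute of_nat_mult)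
    have f0: "real (n + 1 choose 0) * x m ^ (n + 1 - 0) *
          (if 0 \<le> m - n then coeff (?U' ^ 0) (m - n - 0) else 0) = 0"
      using nm by auto
    have shift: "(\<Sum>j\<le>n+1. G j) = G 0 + (\<Sum>k\<le>n. G (Suc k))" for G :: "nat \<Rightarrow> real"
      unfolding Suc_eq_plus1[symmetric] by (rule sum.atMost_Suc_shift)
    have "coeff (U m x ^ (n+1)) (m-n) / (n+1)
        = (\<Sum>k\<le>n. real (n + 1 choose Suc k) * x m ^ (n + 1 - Suc k) *
          (if Suc k \<le> m - n then coeff (?U' ^ Suc k) (m - n - Suc k) else 0)) / (n+1)"
      unfolding e shift f0 by simp
    also have "\<dots> = (\<Sum>k\<le>n. real (n + 1 choose Suc k) * real (Suc k) / (n+1) * x m ^ (n - k) *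
          mu k (m - n - 1) ?s)"
      unfolding key sum_divide_distrib by (intro sum.cong) (auto simp: field_simps)
    also have "\<dots> = (\<Sum>k\<le>n. real (n choose k) * x m ^ (n - k) * mu k (m - n - 1) ?s)"
      unfolding binom by simp
    also have "\<dots> = mu n m x" unfolding rec by (simp add: atLeast0AtMost)
    finally show ?thesis by simp
  qed
qed

lemma coeff_aux: "(\<Sum>i\<le>d. coeff D i * coeff Q (d - i) + coeff R (d - i) * coeff P i)
    = coeff (D * Q + P * R) d"
  by (simp add: coeff_mult sum.distrib mult.commute)

lemma coeff_power_deriv:
  assumes "\<And>i. ((\<lambda>y. coeff (P y) i) has_real_derivative coeff D i) (at x)"
  shows "((\<lambda>y. coeff (P y ^ n) d) has_real_derivative coeff (smult (of_nat n) (P x ^ (n - 1) * D)) d) (at x)"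
proof (induction n arbitrary: d)
  case 0
  then show ?case by simp
next
  case (Suc n)
  have D1: "((\<lambda>y. \<Sum>i\<le>d. coeff (P y) i * coeff (P y ^ n) (d - i)) has_real_derivative
        (\<Sum>i\<le>d. coeff D i * coeff (P x ^ n) (d - i)
             + coeff (smult (of_nat n) (P x ^ (n - 1) * D)) (d - i) * coeff (P x) i)) (at x)"
    by (intro DERIV_sum DERIV_mult assms Suc.IH)
  have S2: "(\<Sum>i\<le>d. coeff D i * coeff (P x ^ n) (d - i)
             + coeff (smult (of_nat n) (P x ^ (n - 1) * D)) (d - i) * coeff (P x) i)
       = coeff (D * P x ^ n + P x * smult (of_nat n) (P x ^ (n - 1) * D)) d"
    by (rule coeff_aux)
  have S3: "D * P x ^ n + P x * smult (of_nat n) (P x ^ (n - 1) * D)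
       = smult (of_nat (Suc n)) (P x ^ (Suc n - 1) * D)"
  proof (cases n)
    case 0 then show ?thesis by simp
  next
    case (Suc n')
    then show ?thesis by (simp add: of_nat_mult_conv_smult[symmetric] algebra_simps) (rule poly_eqI, simp add: algebra_simps)
  qed
  have eqf: "(\<lambda>y. coeff (P y ^ Suc n) d) = (\<lambda>y. \<Sum>i\<le>d. coeff (P y) i * coeff (P y ^ n) (d - i))"
    by (simp add: coeff_mult)
  show ?case unfolding eqf using D1 unfolding S2 S3 .
qed

lemma DERIV_mu:
  assumes "1 \<le> n" "n \<le> m"
    and "\<And>i. ((\<lambda>y. coeff (U m (X y)) i) has_real_derivative coeff D i) (at x)"
  shows "((\<lambda>y. mu n m (X y)) has_real_derivative coeff (U m (X x) ^ n * D) (m - n)) (at x)"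
proof -
  have eq: "(\<lambda>y. mu n m (X y)) = (\<lambda>y. coeff (U m (X y) ^ (n+1)) (m - n) / real (n+1))"
    using assms by (simp add: mu_closed)
  have "((\<lambda>y. coeff (U m (X y) ^ (n+1)) (m - n) / real (n+1)) has_real_derivative
        coeff (smult (of_nat (n+1)) (U m (X x) ^ (n + 1 - 1) * D)) (m - n) / real (n+1)) (at x)"
    by (intro DERIV_cdivide coeff_power_deriv assms)
  then show ?thesis unfolding eq by simp
qed

lemma partial_mu:
  assumes "1 \<le> k" "k \<le> m" "1 \<le> j" "j \<le> m"
  shows "partial (mu k m) j v = (if k \<le> j then coeff (U m v ^ k) (j - k) else 0)"
proof -
  have d: "((\<lambda>t. coeff (U m (v(j := t))) i) has_real_derivative coeff (monom 1 (m - j)) i) (at (v j))" for i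
  proof (cases "i = m - j")
    case True
    then have "(\<lambda>t. coeff (U m (v(j := t))) i) = (\<lambda>t. t)"
      using assms by (auto simp: coeff_U)
    then show ?thesis using True by simp
  next
    case False
    have "i < m \<Longrightarrow> m - i \<noteq> j" using False assms by auto
    then have "(\<lambda>t. coeff (U m (v(j := t))) i) = (\<lambda>t. coeff (U m v) i)"
      using assms by (auto simp: coeff_U)
    then show ?thesis using False by (simp add: coeff_monom)
  qed
  have "((\<lambda>t. mu k m (v(j := t))) has_real_derivative
          coeff (U m (v(j := v j)) ^ k * monom 1 (m - j)) (m - k)) (at (v j))"
    by (rule DERIV_mu[OF assms(1,2) d])
  then have "partial (mu k m) j v = coeff (monom 1 (m - j) * U m v ^ k) (m - k)"
    unfolding partial_def by (simp add: DERIV_imp_deriv mult.commute)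
  also have "\<dots> = (if k \<le> j then coeff (U m v ^ k) (j - k) else 0)"
    using assms by (auto simp: coeff_monom_mult intro: arg_cong[where f="coeff _"])
  finally show ?thesis .
qed

lemma conv_sum:
  fixes a b :: "nat \<Rightarrow> real"
  assumes "1 \<le> k" "1 \<le> l"
  shows "(\<Sum>j=1..m. (if k \<le> j then a (j - k) else 0) * (if l \<le> m + 1 - j then b (m + 1 - j - l) else 0))
       = (if k + l \<le> m + 1 then (\<Sum>i\<le>m + 1 - k - l. a i * b (m + 1 - k - l - i)) else 0)"
proof (cases "k + l \<le> m + 1")
  case True
  let ?N = "m + 1 - k - l"
  have "(\<Sum>i\<le>?N. a i * b (?N - i)) = (\<Sum>j\<in>(\<lambda>i. i + k) ` {..?N}. a (j - k) * b (m + 1 - j - l))"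
    by (subst sum.reindex) (auto simp: inj_on_def algebra_simps intro!: sum.cong arg_cong[where f=b])
  also have "\<dots> = (\<Sum>j=1..m. (if k \<le> j then a (j - k) else 0) * (if l \<le> m + 1 - j then b (m + 1 - j - l) else 0))"
  proof (rule sum.mono_neutral_cong_left)
    show "(\<lambda>i. i + k) ` {..?N} \<subseteq> {1..m}" using True assms by auto
    show "\<forall>j\<in>{1..m} - (\<lambda>i. i + k) ` {..?N}. (if k \<le> j then a (j - k) else 0) * (if l \<le> m + 1 - j then b (m + 1 - j - l) else 0) = 0"
    proof
      fix j assume j: "j \<in> {1..m} - (\<lambda>i. i + k) ` {..?N}"
      have "\<not> (k \<le> j \<and> l \<le> m + 1 - j)"
      proof
        assume h: "k \<le> j \<and> l \<le> m + 1 - j"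
        then have "j = (j - k) + k" "j - k \<le> ?N" using j by auto
        then show False using j by blast
      qed
      then show "(if k \<le> j then a (j - k) else 0) * (if l \<le> m + 1 - j then b (m + 1 - j - l) else 0) = 0"
        by auto
    qed
    show "\<And>j. j \<in> (\<lambda>i. i + k) ` {..?N} \<Longrightarrow> a (j - k) * b (m + 1 - j - l) = (if k \<le> j then a (j - k) else 0) * (if l \<le> m + 1 - j then b (m + 1 - j - l) else 0)"
      using True by auto
  qed simp
  finally show ?thesis using True by simp
next
  case False
  have Z: "(if k \<le> j then a (j - k) else 0) * (if l \<le> m + 1 - j then b (m + 1 - j - l) else 0) = 0" if "j \<in> {1..m}" for j
    using False that by auto
  have "(\<Sum>j=1..m. (if k \<le> j then a (j - k) else 0) * (if l \<le> m + 1 - j then b (m + 1 - j - l) else 0)) = 0"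
    by (rule sum.neutral) (use Z in blast)
  then show ?thesis using False by simp
qed


theorem proposition4:
  fixes m k l :: nat and v :: "nat \<Rightarrow> real"
    and \<nu> :: "real \<Rightarrow> nat \<Rightarrow> real" and x0 :: real
  assumes "1 \<le> m" and "k \<in> {1..m}" and "l \<in> {1..m}"
    and "\<forall>i\<in>{1..m}. smooth_fun (\<lambda>x. \<nu> x i)"
  shows "(\<Sum>j = 1..m. partial (mu k m) j v * partial (mu l m) (m + 1 - j) v)
           = real (k + l) * mu (k + l - 1) m v
       \<and> (\<Sum>j = 1..m. deriv (\<lambda>x. partial (mu k m) j (\<nu> x)) x0
                        * partial (mu l m) (m + 1 - j) (\<nu> x0))
           = real k * deriv (\<lambda>x. mu (k + l - 1) m (\<nu> x)) x0"
proof
  have k: "1 \<le> k" "k \<le> m" and l: "1 \<le> l" "l \<le> m" using assms by auto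
  let ?N = "m + 1 - k - l"
  have mu0: "mu (k + l - 1) m y = 0" if "\<not> k + l \<le> m + 1" for y
    using that k l by (subst mu.simps) auto
  have muc: "mu (k + l - 1) m y = coeff (U m y ^ (k + l)) ?N / real (k + l)" if "k + l \<le> m + 1" for y
  proof -
    have e1: "k + l - 1 + 1 = k + l" and e2: "m - (k + l - 1) = ?N" using that k l by auto
    have "mu (k + l - 1) m y = coeff (U m y ^ (k + l - 1 + 1)) (m - (k + l - 1)) / real (k + l - 1 + 1)"
      using that k l by (intro mu_closed) auto
    then show ?thesis unfolding e1 e2 .
  qed
  show "(\<Sum>j = 1..m. partial (mu k m) j v * partial (mu l m) (m + 1 - j) v)
           = real (k + l) * mu (k + l - 1) m v"
  proof -
    have "(\<Sum>j = 1..m. partial (mu k m) j v * partial (mu l m) (m + 1 - j) v)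
        = (\<Sum>j=1..m. (if k \<le> j then coeff (U m v ^ k) (j - k) else 0) *
                      (if l \<le> m + 1 - j then coeff (U m v ^ l) (m + 1 - j - l) else 0))"
    proof (intro sum.cong refl)
      fix j assume j: "j \<in> {1..m}"
      then have "1 \<le> m + 1 - j" "m + 1 - j \<le> m" "1 \<le> j" "j \<le> m" by auto
      then show "partial (mu k m) j v * partial (mu l m) (m + 1 - j) v =
        (if k \<le> j then coeff (U m v ^ k) (j - k) else 0) *
        (if l \<le> m + 1 - j then coeff (U m v ^ l) (m + 1 - j - l) else 0)"
        using partial_mu[OF k, of j v] partial_mu[OF l, of "m + 1 - j" v] by simp
    qed
    also have "\<dots> = (if k + l \<le> m + 1 then (\<Sum>i\<le>?N. coeff (U m v ^ k) i * coeff (U m v ^ l) (?N - i)) else 0)"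
      by (rule conv_sum[OF k(1) l(1)])
    also have "\<dots> = real (k + l) * mu (k + l - 1) m v"
    proof (cases "k + l \<le> m + 1")
      case True
      have s: "(\<Sum>i\<le>?N. coeff (U m v ^ k) i * coeff (U m v ^ l) (?N - i)) = coeff (U m v ^ (k + l)) ?N"
        by (simp only: coeff_mult[symmetric] power_add[symmetric])
      have "real (k + l) * mu (k + l - 1) m v = coeff (U m v ^ (k + l)) ?N"
        using muc[OF True, of v] k by simp
      then show ?thesis using True s by simp
    next
      case False
      then show ?thesis using mu0[OF False] by simp
    qed
    finally show ?thesis .
  qed
  show "(\<Sum>j = 1..m. deriv (\<lambda>x. partial (mu k m) j (\<nu> x)) x0
                        * partial (mu l m) (m + 1 - j) (\<nu> x0))
           = real k * deriv (\<lambda>x. mu (k + l - 1) m (\<nu> x)) x0"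
  proof -
    let ?U0 = "U m (\<nu> x0)"
    let ?D = "U m (\<lambda>i. deriv (\<lambda>x. \<nu> x i) x0)"
    have dU: "((\<lambda>y. coeff (U m (\<nu> y)) i) has_real_derivative coeff ?D i) (at x0)" for i
    proof (cases "i < m")
      case True
      then have "m - i \<in> {1..m}" by auto
      then have "smooth_fun (\<lambda>x. \<nu> x (m - i))" using assms(4) by blast
      then have "(\<lambda>x. \<nu> x (m - i)) differentiable (at x0)"
        unfolding smooth_fun_def by (metis funpow_0)
      then have "((\<lambda>x. \<nu> x (m - i)) has_real_derivative deriv (\<lambda>x. \<nu> x (m - i)) x0) (at x0)"
        using DERIV_deriv_iff_real_differentiable by blast
      then show ?thesis using True by (simp add: coeff_U)
    next
      case False
      then show ?thesis by (simp add: coeff_U)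
    qed
    have dp: "deriv (\<lambda>x. partial (mu k m) j (\<nu> x)) x0
        = (if k \<le> j then real k * coeff (?U0 ^ (k - 1) * ?D) (j - k) else 0)" if "j \<in> {1..m}" for j
    proof -
      have eq: "(\<lambda>x. partial (mu k m) j (\<nu> x)) = (\<lambda>x. if k \<le> j then coeff (U m (\<nu> x) ^ k) (j - k) else 0)"
        using that k by (simp add: partial_mu)
      show ?thesis
      proof (cases "k \<le> j")
        case True
        have "((\<lambda>x. coeff (U m (\<nu> x) ^ k) (j - k)) has_real_derivative
               coeff (smult (of_nat k) (?U0 ^ (k - 1) * ?D)) (j - k)) (at x0)"
          by (rule coeff_power_deriv[OF dU])
        then show ?thesis unfolding eq using True by (simp add: DERIV_imp_deriv)
      next
        case False
        then show ?thesis unfolding eq by simp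
      qed
    qed
    have "(\<Sum>j = 1..m. deriv (\<lambda>x. partial (mu k m) j (\<nu> x)) x0
                        * partial (mu l m) (m + 1 - j) (\<nu> x0))
        = (\<Sum>j=1..m. (if k \<le> j then real k * coeff (?U0 ^ (k - 1) * ?D) (j - k) else 0) *
                      (if l \<le> m + 1 - j then coeff (?U0 ^ l) (m + 1 - j - l) else 0))"
    proof (intro sum.cong refl)
      fix j assume j: "j \<in> {1..m}"
      then have "1 \<le> m + 1 - j" "m + 1 - j \<le> m" "1 \<le> j" "j \<le> m" by auto
      then show "deriv (\<lambda>x. partial (mu k m) j (\<nu> x)) x0 * partial (mu l m) (m + 1 - j) (\<nu> x0) =
        (if k \<le> j then real k * coeff (?U0 ^ (k - 1) * ?D) (j - k) else 0) *
        (if l \<le> m + 1 - j then coeff (?U0 ^ l) (m + 1 - j - l) else 0)"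
        using dp[OF j] partial_mu[OF l, of "m + 1 - j" "\<nu> x0"] by simp
    qed
    also have "\<dots> = (if k + l \<le> m + 1 then (\<Sum>i\<le>?N. real k * coeff (?U0 ^ (k - 1) * ?D) i * coeff (?U0 ^ l) (?N - i)) else 0)"
      by (rule conv_sum[OF k(1) l(1)])
    also have "\<dots> = real k * deriv (\<lambda>x. mu (k + l - 1) m (\<nu> x)) x0"
    proof (cases "k + l \<le> m + 1")
      case True
      have "((\<lambda>x. mu (k + l - 1) m (\<nu> x)) has_real_derivative
              coeff (?U0 ^ (k + l - 1) * ?D) (m - (k + l - 1))) (at x0)"
        using True k l by (intro DERIV_mu dU) auto
      then have dd: "deriv (\<lambda>x. mu (k + l - 1) m (\<nu> x)) x0 = coeff (?U0 ^ (k + l - 1) * ?D) ?N"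
        using True k l by (simp add: DERIV_imp_deriv Suc_diff_le)
      have pe: "?U0 ^ (k - 1) * ?D * ?U0 ^ l = ?U0 ^ (k + l - 1) * ?D"
      proof -
        have "k + l - 1 = (k - 1) + l" using k by auto
        then show ?thesis by (simp add: power_add algebra_simps)
      qed
      have sf: "(\<Sum>i\<le>?N. real k * coeff (?U0 ^ (k - 1) * ?D) i * coeff (?U0 ^ l) (?N - i))
          = real k * coeff (?U0 ^ (k - 1) * ?D * ?U0 ^ l) ?N"
      proof -
        have "(\<Sum>i\<le>?N. real k * coeff (?U0 ^ (k - 1) * ?D) i * coeff (?U0 ^ l) (?N - i))
            = real k * (\<Sum>i\<le>?N. coeff (?U0 ^ (k - 1) * ?D) i * coeff (?U0 ^ l) (?N - i))"
          by (simp add: sum_distrib_left mult.assoc)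
        also have "\<dots> = real k * coeff (?U0 ^ (k - 1) * ?D * ?U0 ^ l) ?N"
          by (simp only: coeff_mult)
        finally show ?thesis .
      qed
      show ?thesis using True unfolding sf pe dd by simp
    next
      case False
      have "(\<lambda>x. mu (k + l - 1) m (\<nu> x)) = (\<lambda>x. 0)" using mu0[OF False] by simp
      then show ?thesis using False by simp
    qed
    finally show ?thesis .
  qed
qed

end
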